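(* Let $\phi$ be the $2$-spin structure on the closed torus $\Sigma_1$ with $\phi(\alpha)=1$ and $\phi(\beta)=0$, where $\alpha,\beta$ are simple closed curves with $|\alpha\cap\beta|=1$. Set $a=t_\alpha$ and $b=t_\beta$. Then $\operatorname{Mod}(\Sigma_1)[\phi]$ is generated by $a^2$ and $b$, and has the presentation $\langle a^2,b\mid (a^2b)^2=(ba^2)^2,\ (a^2b)^4=1\rangle$.
   Context: A $2$-spin structure on a surface is a map $\phi$ from isotopy classes of oriented simple closed curves to $\mathbb{Z}/2$ with $\phi(t_c(d))=\phi(d)+(d\cdot c)\phi(c)$ ($t_c$ Dehn twist, $d\cdot c$ algebraic intersection) and $\sum\phi(c_i)=\chi(S)\bmod 2$ whenever $c_1,\dots,c_m$ is the oriented boundary of a subsurface $S$; it is determined by its values on a homology basis. $\operatorname{Mod}(\Sigma_1)$ acts by $(f\cdot\phi)(c)=\phi(f^{-1}(c))$ and $\operatorname{Mod}(\Sigma_1)[\phi]$ is the stabilizer of $\phi$. The claimed presentation means that the abstract group with generators $x,y$ and relations $(xy)^2=(yx)^2$, $(xy)^4=1$ is isomorphic to $\operatorname{Mod}(\Sigma_1)[\phi]$ via $x\mapsto t_\alpha^2$, $y\mapsto t_\beta$. *)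

theory Defs
  imports "HOL-Algebra.Generated_Groups"
begin

text \<open>Model: Mod(Sigma_1) = SL(2,Z) acting on H_1(Sigma_1;Z) = Z^2 with basis
  alpha = (1,0), beta = (0,1). A matrix (a,b,c,d) stands for [[a,b],[c,d]],
  acting on column vectors. Isotopy classes of oriented essential simple closed
  curves correspond to primitive vectors of Z^2.\<close>

type_synonym mat2 = "int \<times> int \<times> int \<times> int"
type_synonym vec2 = "int \<times> int"

definition mmul :: "mat2 \<Rightarrow> mat2 \<Rightarrow> mat2" where
  "mmul m n = (case m of (a,b,c,d) \<Rightarrow> case n of (e,f,g,h) \<Rightarrow>
     (a*e + b*g, a*f + b*h, c*e + d*g, c*f + d*h))"

definition mdet :: "mat2 \<Rightarrow> int" where
  "mdet m = (case m of (a,b,c,d) \<Rightarrow> a*d - b*c)"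

definition minv :: "mat2 \<Rightarrow> mat2" where
  "minv m = (case m of (a,b,c,d) \<Rightarrow> (d, -b, -c, a))"

definition mapply :: "mat2 \<Rightarrow> vec2 \<Rightarrow> vec2" where
  "mapply m v = (case m of (a,b,c,d) \<Rightarrow> case v of (x,y) \<Rightarrow> (a*x + b*y, c*x + d*y))"

definition SL2Z :: "mat2 monoid" where
  "SL2Z = \<lparr>carrier = {m. mdet m = 1}, mult = mmul, one = (1,0,0,1)\<rparr>"

text \<open>Algebraic intersection number on H_1 of the torus, alpha . beta = 1.\<close>
definition ipair :: "vec2 \<Rightarrow> vec2 \<Rightarrow> int" where
  "ipair u v = fst u * snd v - snd u * fst v"

definition primitive :: "vec2 \<Rightarrow> bool" where
  "primitive v = (gcd (fst v) (snd v) = 1)"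

definition twist_vec :: "vec2 \<Rightarrow> vec2 \<Rightarrow> vec2" where
  "twist_vec c d = (fst d + ipair c d * fst c, snd d + ipair c d * snd c)"

definition dehn :: "vec2 \<Rightarrow> mat2" where
  "dehn c = (case c of (p,q) \<Rightarrow> (1 - p*q, p*p, - q*q, 1 + p*q))"

definition t_alpha :: mat2 where "t_alpha = dehn (1,0)"
definition t_beta :: mat2 where "t_beta = dehn (0,1)"

text \<open>2-spin structures on the torus, with values in Z/2 represented by {0,1}.
  The twist formula for all curves c, d; the subsurface (Euler characteristic)
  condition: essential disjoint curves on the torus are parallel, so the only
  subsurfaces bounded by essential curves are annuli bounded by c and its reverse,
  giving phi(c) + phi(-c) = 0 mod 2.\<close>
definition spin2 :: "(vec2 \<Rightarrow> int) \<Rightarrow> bool" where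
  "spin2 \<phi> \<longleftrightarrow>
     (\<forall>c. primitive c \<longrightarrow> \<phi> c \<in> {0,1}) \<and>
     (\<forall>c d. primitive c \<longrightarrow> primitive d \<longrightarrow>
        \<phi> (twist_vec c d) mod 2 = (\<phi> d + ipair d c * \<phi> c) mod 2) \<and>
     (\<forall>c. primitive c \<longrightarrow> (\<phi> c + \<phi> (- fst c, - snd c)) mod 2 = 0)"

definition spin_stab :: "(vec2 \<Rightarrow> int) \<Rightarrow> mat2 set" where
  "spin_stab \<phi> = {f \<in> carrier SL2Z. \<forall>c. primitive c \<longrightarrow> \<phi> (mapply (minv f) c) = \<phi> c}"

definition StabGroup :: "(vec2 \<Rightarrow> int) \<Rightarrow> mat2 monoid" where
  "StabGroup \<phi> = SL2Z\<lparr>carrier := spin_stab \<phi>\<rparr>"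

end

theory Submission
  imports Defs
begin


lemma mmul_assoc: "mmul (mmul a b) c = mmul a (mmul b c)"
  by (cases a; cases b; cases c) (simp add: mmul_def algebra_simps)

lemma mdet_mmul: "mdet (mmul a b) = mdet a * mdet b"
  by (cases a; cases b) (simp add: mmul_def mdet_def algebra_simps)

lemma mmul_one[simp]: "mmul (1,0,0,1) a = a" "mmul a (1,0,0,1) = a"
  by (cases a; simp add: mmul_def)+

lemma minv_l: "mdet a = 1 \<Longrightarrow> mmul (minv a) a = (1,0,0,1)"
  by (cases a) (simp add: mmul_def minv_def mdet_def algebra_simps)
lemma minv_r: "mdet a = 1 \<Longrightarrow> mmul a (minv a) = (1,0,0,1)"
  by (cases a) (simp add: mmul_def minv_def mdet_def algebra_simps)
lemma mdet_minv: "mdet (minv a) = mdet a"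
  by (cases a) (simp add: minv_def mdet_def algebra_simps)

lemma SL2Z_simps[simp]: "carrier SL2Z = {m. mdet m = 1}" "mult SL2Z = mmul" "one SL2Z = (1,0,0,1)"
  by (simp_all add: SL2Z_def)

lemma monoid_SL2Z: "monoid SL2Z"
  by (rule monoidI) (auto simp: mdet_mmul mmul_assoc, simp add: mdet_def)

lemma group_SL2Z: "group SL2Z"
proof (rule monoid.group_l_invI[OF monoid_SL2Z])
  fix x assume "x \<in> carrier SL2Z"
  then show "\<exists>y\<in>carrier SL2Z. y \<otimes>\<^bsub>SL2Z\<^esub> x = \<one>\<^bsub>SL2Z\<^esub>"
    by (intro bexI[of _ "minv x"]) (auto simp: minv_l mdet_minv)
qed

lemma inv_SL2Z: "mdet a = 1 \<Longrightarrow> inv\<^bsub>SL2Z\<^esub> a = minv a"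
  using group.inv_equality[OF group_SL2Z, of "minv a" a]
  by (simp add: minv_l mdet_minv)




fun evl :: "('a,'m) monoid_scheme \<Rightarrow> 'a \<Rightarrow> 'a \<Rightarrow> int list \<Rightarrow> 'a" where
  "evl H a b [] = \<one>\<^bsub>H\<^esub>"
| "evl H a b [n] = a [^]\<^bsub>H\<^esub> n"
| "evl H a b (n # m # r) = a [^]\<^bsub>H\<^esub> n \<otimes>\<^bsub>H\<^esub> (a \<otimes>\<^bsub>H\<^esub> b) \<otimes>\<^bsub>H\<^esub> evl H a b (m # r)"

definition evp :: "('a,'m) monoid_scheme \<Rightarrow> 'a \<Rightarrow> 'a \<Rightarrow> bool \<times> int list \<Rightarrow> 'a" where
  "evp H a b P = (if fst P then (a \<otimes>\<^bsub>H\<^esub> b) \<otimes>\<^bsub>H\<^esub> (a \<otimes>\<^bsub>H\<^esub> b) else \<one>\<^bsub>H\<^esub>) \<otimes>\<^bsub>H\<^esub> evl H a b (snd P)"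

fun nf :: "int list \<Rightarrow> bool" where
  "nf [] = False"
| "nf [n] = True"
| "nf (n # m # r) = ((r \<noteq> [] \<longrightarrow> m \<noteq> 0) \<and> nf (m # r))"

definition mx :: "int \<Rightarrow> bool \<times> int list \<Rightarrow> bool \<times> int list" where
  "mx k P = (fst P, butlast (snd P) @ [last (snd P) + k])"

definition mz :: "bool \<times> int list \<Rightarrow> bool \<times> int list" where
  "mz P = (if length (snd P) \<ge> 2 \<and> last (snd P) = 0 then (\<not> fst P, butlast (snd P))
           else (fst P, snd P @ [0]))"

fun mull :: "bool \<times> int list \<Rightarrow> int list \<Rightarrow> bool \<times> int list" where
  "mull P [] = P"
| "mull P [m] = mx m P"
| "mull P (m # m' # r) = mull (mz (mx m P)) (m' # r)"

definition mulnf :: "bool \<times> int list \<Rightarrow> bool \<times> int list \<Rightarrow> bool \<times> int list" where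
  "mulnf P Q = mull (if fst Q then (\<not> fst P, snd P) else P) (snd Q)"

lemma nf_ne: "nf ns \<Longrightarrow> ns \<noteq> []" by auto

lemma nf_snoc: "ns \<noteq> [] \<Longrightarrow> nf (ns @ [m]) \<longleftrightarrow> nf ns \<and> (length ns \<ge> 2 \<longrightarrow> last ns \<noteq> 0)"
proof (induction ns rule: nf.induct)
  case (3 n m' r)
  then show ?case by (cases r) auto
qed auto

lemma nf_mx: "nf (snd P) \<Longrightarrow> nf (snd (mx k P))"
proof -
  assume h: "nf (snd P)"
  then obtain pre l where e: "snd P = pre @ [l]" by (metis nf_ne rev_exhaust)
  show ?thesis
  proof (cases "pre = []")
    case True then show ?thesis using e by (simp add: mx_def)
  next
    case False then show ?thesis using e h nf_snoc[OF False] by (simp add: mx_def)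
  qed
qed

lemma nf_mz: "nf (snd P) \<Longrightarrow> nf (snd (mz P))"
proof -
  assume h: "nf (snd P)"
  then obtain pre l where e: "snd P = pre @ [l]" by (metis nf_ne rev_exhaust)
  show ?thesis
  proof (cases "pre = []")
    case True then show ?thesis using e by (simp add: mz_def)
  next
    case False
    then show ?thesis using e h nf_snoc[OF False] nf_snoc[of "pre @ [l]" 0]
      by (auto simp add: mz_def)
  qed
qed

lemma nf_mull: "nf (snd P) \<Longrightarrow> nf (snd (mull P ms))"
  by (induction P ms rule: mull.induct) (auto simp: nf_mx nf_mz)

lemma nf_mulnf: "nf (snd P) \<Longrightarrow> nf (snd (mulnf P Q))"
  by (simp add: mulnf_def nf_mull)

locale rels = group +
  fixes a b
  assumes a_in[simp]: "a \<in> carrier G" and b_in[simp]: "b \<in> carrier G"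
    and r1: "(a \<otimes> b) [^] (2::nat) = (b \<otimes> a) [^] (2::nat)"
    and r2: "(a \<otimes> b) [^] (4::nat) = \<one>"
begin

definition "z = a \<otimes> b"
definition "w = z \<otimes> z"

lemma z_in[simp]: "z \<in> carrier G" and w_in[simp]: "w \<in> carrier G" by (auto simp: z_def w_def)

lemma evl_cons: "evl G a b (n # m # r) = a [^] n \<otimes> z \<otimes> evl G a b (m # r)"
  by (simp add: z_def)

lemma evp_def': "evp G a b P = (if fst P then w else \<one>) \<otimes> evl G a b (snd P)"
  by (simp add: evp_def w_def z_def)

declare evl.simps(3)[simp del] evl_cons[simp]

lemma ww: "w \<otimes> w = \<one>"
proof -
  have "(a \<otimes> b) [^] (4::nat) = w \<otimes> w"
    by (simp add: numeral_eq_Suc m_assoc w_def z_def)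
  then show ?thesis using r2 by simp
qed

lemma wa: "w \<otimes> a = a \<otimes> w"
proof -
  have e: "w = (b \<otimes> a) \<otimes> (b \<otimes> a)"
    using r1 by (simp add: numeral_eq_Suc w_def z_def)
  have "a \<otimes> w = a \<otimes> ((b \<otimes> a) \<otimes> (b \<otimes> a))" using e by simp
  also have "\<dots> = (a \<otimes> b) \<otimes> (a \<otimes> b) \<otimes> a" by (simp add: m_assoc)
  finally show ?thesis by (simp add: w_def z_def)
qed

lemma w_inva: "w \<otimes> inv a = inv a \<otimes> w"
proof -
  have "w = a \<otimes> (w \<otimes> inv a)"
  proof -
    have "a \<otimes> (w \<otimes> inv a) = (a \<otimes> w) \<otimes> inv a" by (simp add: m_assoc)
    also have "\<dots> = (w \<otimes> a) \<otimes> inv a" by (simp add: wa)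
    also have "\<dots> = w" by (simp add: m_assoc)
    finally show ?thesis by simp
  qed
  then show ?thesis using inv_solve_left[of "w \<otimes> inv a" a w] by simp
qed
lemma w_apow: "w \<otimes> a [^] (n::int) = a [^] n \<otimes> w"
proof (cases "n < 0")
  case True
  then have e: "a [^] n = inv a [^] (nat (-n))" by (simp add: int_pow_def2 nat_pow_inv del: pow_nat)
  have "inv a [^] (nat (-n)) \<otimes> w = w \<otimes> inv a [^] (nat (-n))"
    by (rule group_commutes_pow) (use w_inva in auto)
  then show ?thesis using e by simp
next
  case False
  then have e: "a [^] n = a [^] (nat n)" by (simp add: int_pow_def2 del: pow_nat)
  have "a [^] (nat n) \<otimes> w = w \<otimes> a [^] (nat n)"
    by (rule group_commutes_pow) (use wa in auto)
  then show ?thesis using e by simp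
qed

lemma ww2: "x \<in> carrier G \<Longrightarrow> w \<otimes> (w \<otimes> x) = x"
  by (simp add: m_assoc[symmetric] ww)

lemma ww3[simp]: "x \<in> carrier G \<Longrightarrow> x \<otimes> w \<otimes> w = x"
  by (simp add: m_assoc ww)

lemma wz: "w \<otimes> z = z \<otimes> w" by (simp add: w_def m_assoc)

lemma evl_in[simp]: "evl G a b ns \<in> carrier G"
  by (induction ns rule: nf.induct) (auto simp: evl_cons)

lemma evp_in[simp]: "evp G a b P \<in> carrier G"
  by (simp add: evp_def)

lemma w_evl: "w \<otimes> evl G a b ns = evl G a b ns \<otimes> w"
proof (induction ns rule: nf.induct)
  case 1
  then show ?case by simp
next
  case (2 n)
  then show ?case using w_apow by simp
next
  case (3 n m r)
  have "w \<otimes> (a [^] n \<otimes> z \<otimes> evl G a b (m # r)) = a [^] n \<otimes> (w \<otimes> z) \<otimes> evl G a b (m # r)"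
    by (simp add: m_assoc[symmetric] w_apow)
  also have "\<dots> = a [^] n \<otimes> z \<otimes> (w \<otimes> evl G a b (m # r))"
    by (simp add: m_assoc wz)
  also have "\<dots> = (a [^] n \<otimes> z \<otimes> evl G a b (m # r)) \<otimes> w"
    using 3 by (simp add: m_assoc)
  finally show ?case by (simp add: evl_cons)
qed

lemma evl_snoc: "ns \<noteq> [] \<Longrightarrow> evl G a b (ns @ [m]) = evl G a b ns \<otimes> z \<otimes> a [^] m"
proof (induction ns)
  case (Cons n ns)
  then show ?case by (cases ns) (auto simp: m_assoc)
qed simp

lemma evl_mx: "ns \<noteq> [] \<Longrightarrow> evl G a b (butlast ns @ [last ns + k]) = evl G a b ns \<otimes> a [^] k"
proof -
  assume "ns \<noteq> []"
  then obtain pre l where e: "ns = pre @ [l]" by (metis rev_exhaust)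
  show ?thesis
  proof (cases "pre = []")
    case True then show ?thesis using e by (simp add: int_pow_mult)
  next
    case False then show ?thesis using e by (simp add: evl_snoc int_pow_mult m_assoc)
  qed
qed

lemma evp_mx: "snd P \<noteq> [] \<Longrightarrow> evp G a b (mx k P) = evp G a b P \<otimes> a [^] k"
  by (simp add: evp_def' mx_def evl_mx m_assoc)

lemma evp_flip: "evp G a b (\<not> fst P, snd P) = evp G a b P \<otimes> w"
  by (auto simp add: evp_def' m_assoc w_evl ww simp del: w_in)

lemma evp_mz: "snd P \<noteq> [] \<Longrightarrow> evp G a b (mz P) = evp G a b P \<otimes> z"
proof -
  assume ne: "snd P \<noteq> []"
  then obtain pre l where e: "snd P = pre @ [l]" by (metis rev_exhaust)
  show ?thesis
  proof (cases "length (snd P) \<ge> 2 \<and> l = 0")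
    case True
    then have pne: "pre \<noteq> []" using e by auto
    have "evp G a b P \<otimes> z = (if fst P then w else \<one>) \<otimes> evl G a b pre \<otimes> w"
      using True e pne by (simp add: evp_def' evl_snoc m_assoc w_def)
    also have "\<dots> = evp G a b (\<not> fst P, pre)"
      by (simp add: evp_def' m_assoc w_evl[symmetric] ww ww2)
    finally show ?thesis using True e by (simp add: mz_def)
  next
    case False
    have s0: "evl G a b ((pre @ [l]) @ [0]) = evl G a b (pre @ [l]) \<otimes> z \<otimes> a [^] (0::int)"
      by (rule evl_snoc) simp
    show ?thesis using False e s0 by (auto simp add: mz_def evp_def' m_assoc)
  qed
qed

lemma mull_ev: "snd P \<noteq> [] \<Longrightarrow> evp G a b (mull P ms) = evp G a b P \<otimes> evl G a b ms \<and> snd (mull P ms) \<noteq> []"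
proof (induction P ms rule: mull.induct)
  case (1 P)
  then show ?case by simp
next
  case (2 P m)
  then show ?case using evp_mx[of P m] by (simp add: mx_def)
next
  case (3 P m m' r)
  have n1: "snd (mx m P) \<noteq> []" by (simp add: mx_def)
  have n2: "snd (mz (mx m P)) \<noteq> []" using 3 by (cases "snd P" rule: rev_exhaust) (auto simp add: mz_def mx_def)
  have "evp G a b (mz (mx m P)) = evp G a b P \<otimes> a [^] m \<otimes> z"
    using 3 n1 by (simp add: evp_mz evp_mx)
  then show ?case using 3(1)[OF n2] by (simp add: m_assoc)
qed

lemma mulnf_ev: "snd P \<noteq> [] \<Longrightarrow> evp G a b (mulnf P Q) = evp G a b P \<otimes> evp G a b Q"
proof -
  assume ne: "snd P \<noteq> []"
  show ?thesis
  proof (cases "fst Q")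
    case True
    have "evp G a b (mulnf P Q) = evp G a b (\<not> fst P, snd P) \<otimes> evl G a b (snd Q)"
      using True ne mull_ev[of "(\<not> fst P, snd P)"] by (simp add: mulnf_def)
    also have "\<dots> = evp G a b P \<otimes> (w \<otimes> evl G a b (snd Q))"
      by (simp add: evp_flip m_assoc)
    also have "w \<otimes> evl G a b (snd Q) = evp G a b Q" using True by (simp add: evp_def')
    finally show ?thesis .
  next
    case False
    then show ?thesis using ne mull_ev[of P] by (simp add: mulnf_def evp_def')
  qed
qed

lemma evp_cons: "evp G a b (s, n # m # r) = a [^] n \<otimes> z \<otimes> evp G a b (s, m # r)"
proof (cases s)
  case True
  have "w \<otimes> (a [^] n \<otimes> z \<otimes> evl G a b (m # r)) = (w \<otimes> a [^] n) \<otimes> z \<otimes> evl G a b (m # r)"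
    by (simp add: m_assoc)
  also have "\<dots> = a [^] n \<otimes> (w \<otimes> z) \<otimes> evl G a b (m # r)" by (simp add: w_apow m_assoc)
  also have "\<dots> = a [^] n \<otimes> z \<otimes> (w \<otimes> evl G a b (m # r))" by (simp add: wz m_assoc)
  finally show ?thesis using True by (simp add: evp_def')
qed (simp add: evp_def')

end




definition outI :: "int \<Rightarrow> int \<Rightarrow> bool" where
  "outI A C \<longleftrightarrow> (C = 0 \<and> A \<noteq> 0) \<or> A * C < 0 \<or> 2 * (C * C) < A * C"

lemma z_out_in:
  fixes A0 C0 :: int
  assumes "outI A0 C0"
  shows "0 < (2*C0 - A0) * (C0 - A0) \<and> (2*C0 - A0) * (C0 - A0) < 2 * ((C0 - A0) * (C0 - A0))"
proof -
  have e1: "(2*C0 - A0) * (C0 - A0) = (A0 - C0) * (A0 - 2*C0)" by algebra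
  have e2: "2 * ((C0 - A0) * (C0 - A0)) - (2*C0 - A0) * (C0 - A0) = A0 * (A0 - C0)" by algebra
  have p: "0 < (A0 - C0) * (A0 - 2*C0) \<and> 0 < A0 * (A0 - C0)"
  proof -
    consider "C0 = 0 \<and> A0 \<noteq> 0" | "A0 * C0 < 0" | "2 * (C0 * C0) < A0 * C0"
      using assms outI_def by blast
    then show ?thesis
    proof cases
      case 1 then show ?thesis by (auto simp add: zero_less_mult_iff)
    next
      case 2
      then have "(A0 > 0 \<and> C0 < 0) \<or> (A0 < 0 \<and> C0 > 0)" by (simp add: mult_less_0_iff)
      then show ?thesis by (auto simp add: zero_less_mult_iff)
    next
      case 3
      have "C0 \<noteq> 0" using 3 by auto
      then consider "C0 > 0" | "C0 < 0" by linarith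
      then show ?thesis
      proof cases
        case 1
        then have "2 * C0 < A0" using 3 by (metis mult.assoc mult_less_cancel_right_pos)
        then show ?thesis using 1 by (auto simp add: zero_less_mult_iff)
      next
        case 2
        then have "A0 < 2 * C0" using 3 by (metis mult.assoc mult_less_cancel_right_neg)
        then show ?thesis using 2 by (auto simp add: zero_less_mult_iff)
      qed
    qed
  qed
  have p1: "0 < (2*C0 - A0) * (C0 - A0)" using p e1 by simp
  have p2: "0 < 2 * ((C0 - A0) * (C0 - A0)) - (2*C0 - A0) * (C0 - A0)" using p e2 by simp
  show ?thesis using p1 p2 by simp
qed

lemma x_in_out:
  fixes A1 C n :: int
  assumes "0 < A1 * C" "A1 * C < 2 * (C * C)"
  shows "2*n*(C*C) < (A1 + 2*n*C) * C \<and> (A1 + 2*n*C) * C < (2*n+2)*(C*C)"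
proof -
  have "(A1 + 2*n*C) * C = A1 * C + 2*n*(C*C)" by algebra
  moreover have "(2*n+2)*(C*C) = 2*n*(C*C) + 2*(C*C)" by algebra
  ultimately show ?thesis using assms by linarith
qed

lemma in_out:
  fixes A C n :: int
  assumes "2*n*(C*C) < A * C" "A * C < (2*n+2)*(C*C)" "n \<noteq> 0"
  shows "outI A C"
proof -
  have "0 \<le> C * C" by simp
  consider "n \<ge> 1" | "n \<le> -1" using assms by linarith
  then show ?thesis
  proof cases
    case 1
    then have "2*(C*C) \<le> 2*n*(C*C)" using \<open>0 \<le> C * C\<close> by (simp add: mult_right_mono)
    then show ?thesis using assms unfolding outI_def by linarith
  next
    case 2
    then have "(2*n+2)*(C*C) \<le> 0" using \<open>0 \<le> C * C\<close> by (simp add: mult_nonpos_nonneg)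
    then show ?thesis using assms unfolding outI_def by linarith
  qed
qed


definition xM :: mat2 where "xM = (1,2,0,1)"
definition yM :: mat2 where "yM = (1,0,-1,1)"
definition negM :: "mat2 \<Rightarrow> mat2" where "negM m = (case m of (a,b,c,d) \<Rightarrow> (-a,-b,-c,-d))"

lemma xM_eq: "mmul t_alpha t_alpha = xM" by (simp add: t_alpha_def dehn_def mmul_def xM_def)
lemma yM_eq: "t_beta = yM" by (simp add: t_beta_def dehn_def yM_def)

interpretation M: rels SL2Z xM yM
proof -
  interpret group SL2Z by (rule group_SL2Z)
  show "rels SL2Z xM yM"
    by unfold_locales (simp_all add: xM_def yM_def mdet_def mmul_def numeral_eq_Suc)
qed

lemma Mz: "M.z = (-1,2,-1,1)" unfolding M.z_def by (simp add: xM_def yM_def mmul_def)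
lemma Mw: "M.w = (-1,0,0,-1)" unfolding M.w_def Mz by (simp add: mmul_def)

lemma xpow_nat: "xM [^]\<^bsub>SL2Z\<^esub> (k::nat) = (1, 2 * int k, 0, 1)"
  by (induction k) (simp_all add: xM_def mmul_def algebra_simps)

lemma xpow: "xM [^]\<^bsub>SL2Z\<^esub> (n::int) = (1, 2 * n, 0, 1)"
proof (cases "n < 0")
  case True
  have "xM [^]\<^bsub>SL2Z\<^esub> n = inv\<^bsub>SL2Z\<^esub> (xM [^]\<^bsub>SL2Z\<^esub> (nat (-n)))"
    using True by (simp add: int_pow_def2 del: pow_nat)
  also have "\<dots> = minv (1, 2 * int (nat (-n)), 0, 1)"
    by (simp add: xpow_nat inv_SL2Z mdet_def)
  finally show ?thesis using True by (simp add: minv_def)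
next
  case False
  then have "xM [^]\<^bsub>SL2Z\<^esub> n = xM [^]\<^bsub>SL2Z\<^esub> (nat n)" by (simp add: int_pow_def2 del: pow_nat)
  then show ?thesis using False by (simp add: xpow_nat)
qed

lemma evl_M_cons: "evl SL2Z xM yM (n # m # r) = mmul (mmul (1, 2*n, 0, 1) (-1,2,-1,1)) (evl SL2Z xM yM (m # r))"
  by (simp add: xpow Mz)

lemma evl_M_single: "evl SL2Z xM yM [n] = (1, 2*n, 0, 1)"
  by (simp add: xpow)

lemma evp_M: "evp SL2Z xM yM (s, ns) = (if s then negM (evl SL2Z xM yM ns) else evl SL2Z xM yM ns)"
  by (cases "evl SL2Z xM yM ns") (simp add: M.evp_def' Mw mmul_def negM_def)

lemma pp: "nf ns \<Longrightarrow> length ns \<ge> 2 \<Longrightarrow> evl SL2Z xM yM ns = (A,B,C,D) \<Longrightarrow>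
   2*hd ns*(C*C) < A*C \<and> A*C < (2*hd ns+2)*(C*C)"
proof (induction ns arbitrary: A B C D rule: nf.induct)
  case (3 n m r)
  obtain A0 B0 C0 D0 where N: "evl SL2Z xM yM (m # r) = (A0,B0,C0,D0)" by (cases "evl SL2Z xM yM (m # r)")
  have o: "outI A0 C0"
  proof (cases "r = []")
    case True
    then show ?thesis using N by (simp add: xpow outI_def)
  next
    case False
    then have "m \<noteq> 0" "nf (m # r)" "length (m # r) \<ge> 2" using 3 by (auto simp: neq_Nil_conv)
    then show ?thesis using 3(1)[OF _ _ N] in_out[of m C0 A0] by simp
  qed
  have "mmul (mmul (1, 2*n, 0, 1) (-1,2,-1,1)) (A0,B0,C0,D0) = (A,B,C,D)"
    using 3(4) by (simp only: evl_M_cons N)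
  then have e: "A = (2*C0 - A0) + 2*n*C" "C = C0 - A0"
    by (auto simp: mmul_def algebra_simps)
  show ?case using z_out_in[OF o] x_in_out[of "2*C0 - A0" "C0 - A0" n] e by simp
qed auto


lemma negM_negM[simp]: "negM (negM m) = m" by (cases m) (simp add: negM_def)

lemma ppS: "nf ns \<Longrightarrow> length ns \<ge> 2 \<Longrightarrow> evp SL2Z xM yM (s, ns) = (A,B,C,D) \<Longrightarrow>
   2*hd ns*(C*C) < A*C \<and> A*C < (2*hd ns+2)*(C*C)"
proof (cases s)
  case True
  assume h: "nf ns" "length ns \<ge> 2" "evp SL2Z xM yM (s, ns) = (A,B,C,D)"
  then have "evl SL2Z xM yM ns = (-A,-B,-C,-D)"
    using True evp_M[of s ns] by (metis negM_negM negM_def case_prod_conv)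
  from pp[OF h(1,2) this] show ?thesis by simp
next
  case False
  assume h: "nf ns" "length ns \<ge> 2" "evp SL2Z xM yM (s, ns) = (A,B,C,D)"
  have "evl SL2Z xM yM ns = (A,B,C,D)" using h(3) False evp_M[of s ns] by simp
  from pp[OF h(1,2) this] show ?thesis .
qed

lemma interval_unique:
  fixes n n' K P :: int
  assumes "2*n*K < P" "P < (2*n+2)*K" "2*n'*K < P" "P < (2*n'+2)*K"
  shows "n = n'"
proof -
  have e: "(2*n+2)*K = 2*n*K + 2*K" "(2*n'+2)*K = 2*n'*K + 2*K" by algebra+
  then have K: "K > 0" using assms by linarith
  have "2*n*K < (2*n'+2)*K" "2*n'*K < (2*n+2)*K" using assms by linarith+
  then have "2*n < 2*n'+2" "2*n' < 2*n+2" using K mult_less_cancel_right_pos by blast+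
  then show ?thesis by linarith
qed

lemma single_C0: "evp SL2Z xM yM (s, [n]) = (A,B,C,D) \<Longrightarrow> C = 0"
  by (cases s) (auto simp: evp_M xpow negM_def)

lemma long_C: "nf ns \<Longrightarrow> length ns \<ge> 2 \<Longrightarrow> evp SL2Z xM yM (s, ns) = (A,B,C,D) \<Longrightarrow> C \<noteq> 0"
  using ppS[of ns s A B C D] by auto

lemma evp_inj: "nf ns1 \<Longrightarrow> nf ns2 \<Longrightarrow> evp SL2Z xM yM (s1, ns1) = evp SL2Z xM yM (s2, ns2) \<Longrightarrow>
  s1 = s2 \<and> ns1 = ns2"
proof (induction ns1 arbitrary: s1 ns2 s2 rule: nf.induct)
  case 1
  then show ?case by simp
next
  case (2 n)
  obtain A B C D where E: "evp SL2Z xM yM (s2, ns2) = (A,B,C,D)" by (cases "evp SL2Z xM yM (s2, ns2)")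
  have "C = 0" using single_C0 2(3) E by metis
  then have "length ns2 < 2" using long_C[OF 2(2) _ E] by linarith
  then obtain n' where n': "ns2 = [n']" using 2(2) by (cases ns2 rule: nf.cases) auto
  show ?case using 2(3) unfolding n' by (cases s1; cases s2) (auto simp: evp_M xpow negM_def)
next
  case (3 n m r)
  obtain A B C D where E: "evp SL2Z xM yM (s2, ns2) = (A,B,C,D)" by (cases "evp SL2Z xM yM (s2, ns2)")
  have E1: "evp SL2Z xM yM (s1, n # m # r) = (A,B,C,D)" using 3(4) E by simp
  have "C \<noteq> 0" using long_C[OF 3(2) _ E1] by simp
  then have "\<not> length ns2 < 2" using single_C0 E 3(3) by (cases ns2 rule: nf.cases) auto
  then obtain n' m' r' where n': "ns2 = n' # m' # r'" using 3(3) by (cases ns2 rule: nf.cases) auto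
  have nn: "n = n'"
    using ppS[OF 3(2) _ E1] ppS[OF 3(3) _ E] interval_unique unfolding n' by auto
  have "xM [^]\<^bsub>SL2Z\<^esub> n \<otimes>\<^bsub>SL2Z\<^esub> M.z \<otimes>\<^bsub>SL2Z\<^esub> evp SL2Z xM yM (s1, m # r) =
        xM [^]\<^bsub>SL2Z\<^esub> n \<otimes>\<^bsub>SL2Z\<^esub> M.z \<otimes>\<^bsub>SL2Z\<^esub> evp SL2Z xM yM (s2, m' # r')"
    using 3(4) unfolding n' nn M.evp_cons by simp
  moreover have "xM [^]\<^bsub>SL2Z\<^esub> n \<otimes>\<^bsub>SL2Z\<^esub> M.z \<in> Units SL2Z"
    using M.Units_eq M.m_closed M.int_pow_closed M.a_in M.z_in by blast
  ultimately have "evp SL2Z xM yM (s1, m # r) = evp SL2Z xM yM (s2, m' # r')"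
    by (metis M.Units_l_cancel M.evp_in)
  then have "s1 = s2 \<and> m # r = m' # r'" using 3 unfolding n' by auto
  then show ?case using nn n' by simp
qed


lemma choose_k:
  fixes c d :: int
  assumes "c \<noteq> 0" "odd d"
  shows "\<exists>k. nat \<bar>c + (d + 2*k*c)\<bar> < nat \<bar>c\<bar>"
proof -
  define K where "K = 2*(c*c)"
  have "0 < c*c" using assms(1) by (cases "c > 0") (auto simp: mult_pos_pos mult_neg_neg)
  then have K: "K > 0" by (simp add: K_def)
  define q where "q = (d*c) div K"
  define r0 where "r0 = (d*c) mod K"
  have dc: "d*c = K*q + r0" by (simp add: q_def r0_def)
  have r0b: "0 \<le> r0" "r0 < K" using K by (simp_all add: r0_def)
  have r0n: "r0 \<noteq> 0"
  proof
    assume "r0 = 0"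
    then have "d*c = (2*c*q)*c" using dc by (simp add: K_def algebra_simps)
    then have "d = 2*c*q" using assms(1) by simp
    then show False using assms(2) by simp
  qed
  define k where "k = -(q+1)"
  define dk where "dk = d + 2*k*c"
  have "dk * c = r0 - K" unfolding dk_def k_def using dc by (simp add: K_def algebra_simps)
  then have h: "dk * c < 0" "- (2*c)*c < dk * c" using r0b r0n K_def by (auto simp: algebra_simps)
  have "\<bar>c + dk\<bar> < \<bar>c\<bar>"
  proof (cases "c > 0")
    case True
    then have "dk < 0" using h by (simp add: mult_less_0_iff)
    moreover have "-(2*c) < dk" using h(2) True mult_less_cancel_right_pos by blast
    ultimately show ?thesis using True by linarith
  next
    case False
    then have "c < 0" using assms by simp
    then have "dk > 0" using h by (simp add: mult_less_0_iff)
    moreover have "dk < -(2*c)" using h(2) \<open>c < 0\<close> mult_less_cancel_right_neg by blast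
    ultimately show ?thesis using \<open>c < 0\<close> by linarith
  qed
  then show ?thesis unfolding dk_def by (intro exI[of _ k]) linarith
qed

lemma evp_surj: "mdet g = 1 \<Longrightarrow> even (fst (snd g)) \<Longrightarrow> \<exists>s ns. nf ns \<and> evp SL2Z xM yM (s, ns) = g"
proof (induction "nat \<bar>fst (snd (snd g))\<bar>" arbitrary: g rule: less_induct)
  case less
  obtain a b c d where g: "g = (a,b,c,d)" by (cases g)
  obtain k0 where b: "b = 2*k0" using less(3) g by (auto elim: evenE)
  have det: "a*d - b*c = 1" using less(2) g by (simp add: mdet_def)
  show ?case
  proof (cases "c = 0")
    case True
    then have "a*d = 1" using det by simp
    then have "(a = 1 \<and> d = 1) \<or> (a = -1 \<and> d = -1)" by (simp add: zmult_eq_1_iff)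
    then show ?thesis
    proof
      assume "a = 1 \<and> d = 1"
      then have "evp SL2Z xM yM (False, [k0]) = g" using g b True by (simp add: evp_M xpow)
      then show ?thesis by (intro exI[of _ False] exI[of _ "[k0]"]) simp
    next
      assume "a = -1 \<and> d = -1"
      then have "evp SL2Z xM yM (True, [-k0]) = g" using g b True by (simp add: evp_M xpow negM_def)
      then show ?thesis by (intro exI[of _ True] exI[of _ "[-k0]"]) simp
    qed
  next
    case False
    have "odd d"
    proof
      assume "even d"
      then have "even (a*d - b*c)" using b by simp
      then show False using det by simp
    qed
    then obtain k where k: "nat \<bar>c + (d + 2*k*c)\<bar> < nat \<bar>c\<bar>" using choose_k False by blast
    define g2 where "g2 = mmul (mmul g (1, 2*k, 0, 1)) (1,-2,1,-1)"
    have g2e: "g2 = (a + (2*k*a + b), -2*a - (2*k*a+b), c + (d + 2*k*c), -2*c - (d + 2*k*c))"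
      unfolding g2_def g by (simp add: mmul_def algebra_simps)
    have "mdet g2 = 1" unfolding g2_def mdet_mmul less(2) by (simp add: mdet_def)
    moreover have "even (fst (snd g2))" unfolding g2e using b by simp
    moreover have "nat \<bar>fst (snd (snd g2))\<bar> < nat \<bar>fst (snd (snd g))\<bar>" using k g g2e by simp
    ultimately obtain s2 ns2 where IH: "nf ns2" "evp SL2Z xM yM (s2, ns2) = g2"
      using less(1) by blast
    define P where "P = mx (-k) (mz (s2, ns2))"
    have nfP: "nf (snd P)" unfolding P_def using IH(1) by (simp add: nf_mx nf_mz)
    have ne: "ns2 \<noteq> []" using IH(1) by auto
    have ne2: "snd (mz (s2, ns2)) \<noteq> []" using nf_mz[of "(s2,ns2)"] IH(1) by auto
    have "evp SL2Z xM yM P = mmul (mmul g2 M.z) (xM [^]\<^bsub>SL2Z\<^esub> (-k))"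
      unfolding P_def using M.evp_mx[OF ne2] M.evp_mz[of "(s2,ns2)"] ne IH(2) by simp
    also have "\<dots> = g" unfolding g2e Mz xpow g by (simp add: mmul_def algebra_simps)
    finally show ?thesis using nfP by (metis prod.collapse)
  qed
qed




lemma g1: "gcd ((p::int) - q) q = gcd p q" by (metis gcd_add1 diff_add_cancel)
lemma g2: "gcd (p::int) (q + p) = gcd p q" by (metis gcd.commute gcd_add1)
lemma g3: "gcd (p::int) (q - p) = gcd p q" by (metis g2 diff_add_cancel)

definition Gam :: "mat2 set" where "Gam = {m. mdet m = 1 \<and> even (fst (snd m))}"

locale spin_ctx =
  fixes \<phi> :: "vec2 \<Rightarrow> int"
  assumes sp: "spin2 \<phi>" and p10: "\<phi> (1,0) = 1" and p01: "\<phi> (0,1) = 0"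
begin

lemma L1: "primitive (p,q) \<Longrightarrow> \<phi> (p+q,q) mod 2 = (\<phi> (p,q) - q) mod 2"
proof -
  assume h: "primitive (p,q)"
  have "primitive (1,0)" by (simp add: primitive_def)
  then have "\<phi> (twist_vec (1,0) (p,q)) mod 2 = (\<phi> (p,q) + ipair (p,q) (1,0) * \<phi> (1,0)) mod 2"
    using sp h unfolding spin2_def by blast
  then show ?thesis by (simp add: twist_vec_def ipair_def p10)
qed

lemma L2: "primitive (p,q) \<Longrightarrow> \<phi> (p,q-p) mod 2 = \<phi> (p,q) mod 2"
proof -
  assume h: "primitive (p,q)"
  have "primitive (0,1)" by (simp add: primitive_def)
  then have "\<phi> (twist_vec (0,1) (p,q)) mod 2 = (\<phi> (p,q) + ipair (p,q) (0,1) * \<phi> (0,1)) mod 2"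
    using sp h unfolding spin2_def by blast
  then show ?thesis by (simp add: twist_vec_def ipair_def p01)
qed

lemma Nn: "primitive c \<Longrightarrow> (\<phi> c + \<phi> (- fst c, - snd c)) mod 2 = 0"
  using sp unfolding spin2_def by blast

lemma V: "primitive c \<Longrightarrow> \<phi> c \<in> {0,1}"
  using sp unfolding spin2_def by blast

lemma phi_mod: "primitive (p,q) \<Longrightarrow> \<phi> (p,q) mod 2 = p mod 2"
proof (induction "nat (\<bar>p\<bar> + \<bar>q\<bar>)" arbitrary: p q rule: less_induct)
  case less
  have pr: "gcd p q = 1" using less(2) by (simp add: primitive_def)
  show ?case
  proof (cases "q = 0")
    case True
    then have "\<bar>p\<bar> = 1" using pr by simp
    then consider "p = 1" | "p = -1" by linarith
    then show ?thesis
    proof cases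
      case 1 then show ?thesis using True p10 by simp
    next
      case 2
      have "(\<phi> (1,0) + \<phi> (-1, 0)) mod 2 = 0" using Nn[of "(1,0)"] by (simp add: primitive_def)
      then show ?thesis using True 2 p10 by presburger
    qed
  next
    case qn: False
    show ?thesis
    proof (cases "p = 0")
      case True
      then have "\<bar>q\<bar> = 1" using pr by simp
      then consider "q = 1" | "q = -1" by linarith
      then show ?thesis
      proof cases
        case 1 then show ?thesis using True p01 by simp
      next
        case 2
        have "(\<phi> (0,1) + \<phi> (0, -1)) mod 2 = 0" using Nn[of "(0,1)"] by (simp add: primitive_def)
        then show ?thesis using True 2 p01 by presburger
      qed
    next
      case pn: False
      consider "\<bar>p-q\<bar> < \<bar>p\<bar>" | "\<bar>p+q\<bar> < \<bar>p\<bar>" | "\<bar>q-p\<bar> < \<bar>q\<bar>" | "\<bar>q+p\<bar> < \<bar>q\<bar>"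
        using pn qn by arith
      then show ?thesis
      proof cases
        case 1
        have pr': "primitive (p - q, q)" using pr by (simp add: primitive_def g1)
        have "\<phi> (p-q,q) mod 2 = (p - q) mod 2" using less(1)[OF _ pr'] 1 by simp
        moreover have "\<phi> (p,q) mod 2 = (\<phi> (p-q,q) - q) mod 2" using L1[OF pr'] by simp
        ultimately show ?thesis by presburger
      next
        case 2
        have pr': "primitive (p + q, q)" using pr by (simp add: primitive_def)
        have "\<phi> (p+q,q) mod 2 = (p + q) mod 2" using less(1)[OF _ pr'] 2 by simp
        moreover have "\<phi> (p+q,q) mod 2 = (\<phi> (p,q) - q) mod 2" using L1 less(2) by simp
        ultimately show ?thesis by presburger
      next
        case 3
        have pr': "primitive (p, q - p)" using pr by (simp add: primitive_def g3)
        have "\<phi> (p,q-p) mod 2 = p mod 2" using less(1)[OF _ pr'] 3 by simp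
        moreover have "\<phi> (p,q-p) mod 2 = \<phi> (p,q) mod 2" using L2 less(2) by simp
        ultimately show ?thesis by presburger
      next
        case 4
        have pr': "primitive (p, q + p)" using pr by (simp add: primitive_def g2)
        have "\<phi> (p,q+p) mod 2 = p mod 2" using less(1)[OF _ pr'] 4 by (simp add: add.commute)
        moreover have "\<phi> (p,q+p-p) mod 2 = \<phi> (p,q+p) mod 2" using L2[OF pr'] by simp
        ultimately show ?thesis by simp
      qed
    qed
  qed
qed

lemma phi_val: "primitive (p,q) \<Longrightarrow> \<phi> (p,q) = p mod 2"
proof -
  assume h: "primitive (p,q)"
  have "\<phi> (p,q) \<in> {0,1}" using V h by blast
  then show ?thesis using phi_mod[OF h] by auto
qed

lemma prim_map:
  assumes "mdet f = 1" "primitive v"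
  shows "primitive (mapply (minv f) v)"
proof -
  obtain a b c d where f: "f = (a,b,c,d)" by (cases f)
  obtain x y where v: "v = (x,y)" by (cases v)
  have det: "a*d - b*c = 1" using assms(1) f by (simp add: mdet_def)
  define u1 where "u1 = d*x - b*y"
  define u2 where "u2 = -c*x + a*y"
  have m: "mapply (minv f) v = (u1, u2)" by (simp add: f v mapply_def minv_def u1_def u2_def)
  have ex: "x = a*u1 + b*u2"
  proof -
    have "a*u1 + b*u2 = (a*d - b*c)*x" by (simp add: u1_def u2_def algebra_simps)
    then show ?thesis using det by simp
  qed
  have ey: "y = c*u1 + d*u2"
  proof -
    have "c*u1 + d*u2 = (a*d - b*c)*y" by (simp add: u1_def u2_def algebra_simps)
    then show ?thesis using det by simp
  qed
  have d1: "gcd u1 u2 dvd x" "gcd u1 u2 dvd y" unfolding ex ey by simp_all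
  have "gcd u1 u2 dvd gcd x y" using d1 by (rule gcd_greatest)
  moreover have "gcd x y = 1" using assms(2) v by (simp add: primitive_def)
  ultimately have "gcd u1 u2 dvd 1" by simp
  then have "gcd u1 u2 = 1" using zdvd1_eq[of "gcd u1 u2"] by simp
  then show ?thesis using m by (simp add: primitive_def)
qed

lemma stab_eq: "spin_stab \<phi> = Gam"
proof
  show "spin_stab \<phi> \<subseteq> Gam"
  proof
    fix f assume f: "f \<in> spin_stab \<phi>"
    obtain a b c d where fe: "f = (a,b,c,d)" by (cases f)
    have det: "mdet f = 1" using f by (simp add: spin_stab_def)
    have p01: "primitive (0,1)" by (simp add: primitive_def)
    have "\<phi> (mapply (minv f) (0,1)) = \<phi> (0,1)" using f p01 by (simp add: spin_stab_def)
    moreover have pm: "primitive (mapply (minv f) (0,1))" using prim_map[OF det p01] .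
    moreover have "mapply (minv f) (0,1) = (-b, a)" by (simp add: fe mapply_def minv_def)
    ultimately have "(-b) mod 2 = 0" using phi_val p01 spin_ctx.p01 spin_ctx_axioms by (metis)
    then show "f \<in> Gam" using det fe by (simp add: Gam_def) presburger
  qed
next
  show "Gam \<subseteq> spin_stab \<phi>"
  proof
    fix f assume f: "f \<in> Gam"
    obtain a b c d where fe: "f = (a,b,c,d)" by (cases f)
    have det: "mdet f = 1" and eb: "even b" using f fe by (auto simp: Gam_def)
    have dd: "a*d - b*c = 1" using det fe by (simp add: mdet_def)
    have od: "odd d"
    proof
      assume "even d" then have "even (a*d - b*c)" using eb by simp
      then show False using dd by simp
    qed
    have "\<forall>v. primitive v \<longrightarrow> \<phi> (mapply (minv f) v) = \<phi> v"
    proof (intro allI impI)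
      fix v assume pv: "primitive v"
      obtain x y where v: "v = (x,y)" by (cases v)
      have m: "mapply (minv f) v = (d*x - b*y, -c*x + a*y)" by (simp add: fe v mapply_def minv_def)
      have "2 dvd ((d - 1)*x - b*y)" using od eb by simp
      then have "(d*x - b*y) mod 2 = x mod 2"
        by (simp add: mod_eq_dvd_iff algebra_simps)
      then show "\<phi> (mapply (minv f) v) = \<phi> v"
        using phi_val prim_map[OF det pv] pv m v by simp
    qed
    then show "f \<in> spin_stab \<phi>" using det by (simp add: spin_stab_def)
  qed
qed

end




lemma (in rels) evp_gen: "evp G a b P \<in> generate G {a,b}"
proof -
  have sg: "subgroup (generate G {a,b}) G" by (rule generate_is_subgroup) simp
  have ain: "a \<in> generate G {a,b}" and bin: "b \<in> generate G {a,b}" by (auto intro: generate.incl)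
  have zin: "z \<in> generate G {a,b}" unfolding z_def using sg ain bin by (simp add: subgroup.m_closed)
  have pw: "a [^] (n::int) \<in> generate G {a,b}" for n
    using subgroup_int_pow_closed[OF sg ain] .
  have el: "evl G a b ns \<in> generate G {a,b}" for ns
    by (induction ns rule: nf.induct) (auto simp: sg pw zin subgroup.m_closed subgroup.one_closed)
  have win: "w \<in> generate G {a,b}" unfolding w_def using sg zin by (simp add: subgroup.m_closed)
  show ?thesis unfolding evp_def' using sg win el by (simp add: subgroup.m_closed subgroup.one_closed)
qed

lemma evp_hom:
  assumes "group G0" "group H" "h \<in> hom G0 H" "a \<in> carrier G0" "b \<in> carrier G0"
  shows "h (evp G0 a b P) = evp H (h a) (h b) P"
proof -
  interpret gh: group_hom G0 H h using assms by (simp add: group_hom_def group_hom_axioms_def)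
  have el: "h (evl G0 a b ns) = evl H (h a) (h b) ns \<and> evl G0 a b ns \<in> carrier G0" for ns
    by (induction ns rule: nf.induct) (auto simp: assms gh.hom_int_pow evl.simps)
  show ?thesis using el[of "snd P"] assms by (simp add: evp_def)
qed

lemma evp_sub:
  assumes "group G0" "subgroup K G0" "a \<in> K" "b \<in> K"
  shows "evp (G0\<lparr>carrier := K\<rparr>) a b P = evp G0 a b P"
proof -
  have el: "evl (G0\<lparr>carrier := K\<rparr>) a b ns = evl G0 a b ns" for ns
    by (induction ns rule: nf.induct)
       (auto simp: group.int_pow_consistent[OF assms(1,2)] assms evl.simps)
  show ?thesis using el by (simp add: evp_def)
qed


lemma subgroup_Gam: "subgroup Gam SL2Z"
proof (rule subgroup.intro)
  show "Gam \<subseteq> carrier SL2Z" by (auto simp: Gam_def)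
next
  fix g k assume "g \<in> Gam" "k \<in> Gam"
  then have "mdet (mmul g k) = 1" "even (fst (snd g))" "even (fst (snd k))" by (auto simp: Gam_def mdet_mmul)
  then show "g \<otimes>\<^bsub>SL2Z\<^esub> k \<in> Gam"
    by (cases g; cases k) (auto simp: Gam_def mmul_def)
next
  show "\<one>\<^bsub>SL2Z\<^esub> \<in> Gam" by (simp add: Gam_def mdet_def)
next
  fix g assume "g \<in> Gam"
  then show "inv\<^bsub>SL2Z\<^esub> g \<in> Gam"
    by (cases g) (auto simp: Gam_def inv_SL2Z minv_def mdet_def algebra_simps)
qed

lemma Gam_gen: "Gam = generate SL2Z {xM, yM}"
proof
  show "Gam \<subseteq> generate SL2Z {xM, yM}"
  proof
    fix g assume "g \<in> Gam"
    then obtain s ns where "nf ns" "evp SL2Z xM yM (s, ns) = g"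
      using evp_surj[of g] by (auto simp: Gam_def)
    then show "g \<in> generate SL2Z {xM, yM}" using M.evp_gen by metis
  qed
next
  have "{xM, yM} \<subseteq> Gam" by (simp add: Gam_def xM_def yM_def mdet_def)
  then show "generate SL2Z {xM, yM} \<subseteq> Gam"
    using group.generate_subgroup_incl[OF group_SL2Z _ subgroup_Gam] by blast
qed

lemma nfof_ex: "g \<in> Gam \<Longrightarrow> \<exists>!P. nf (snd P) \<and> evp SL2Z xM yM P = g"
proof -
  assume "g \<in> Gam"
  then obtain s ns where h: "nf ns" "evp SL2Z xM yM (s, ns) = g"
    using evp_surj[of g] by (auto simp: Gam_def)
  show ?thesis
  proof (rule ex1I[of _ "(s,ns)"])
    show "nf (snd (s, ns)) \<and> evp SL2Z xM yM (s, ns) = g" using h by simp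
  next
    fix P assume "nf (snd P) \<and> evp SL2Z xM yM P = g"
    then show "P = (s, ns)" using evp_inj[of "snd P" ns "fst P" s] h by (cases P) auto
  qed
qed

definition nfof :: "mat2 \<Rightarrow> bool \<times> int list" where
  "nfof g = (THE P. nf (snd P) \<and> evp SL2Z xM yM P = g)"

lemma nfof: "g \<in> Gam \<Longrightarrow> nf (snd (nfof g)) \<and> evp SL2Z xM yM (nfof g) = g"
  unfolding nfof_def using theI'[OF nfof_ex] by blast

lemma nfof_eq: "nf (snd P) \<Longrightarrow> nfof (evp SL2Z xM yM P) = P"
  unfolding nfof_def
proof (rule the_equality)
  assume "nf (snd P)"
  then show "nf (snd P) \<and> evp SL2Z xM yM P = evp SL2Z xM yM P" by simp
next
  fix Q assume h: "nf (snd P)" "nf (snd Q) \<and> evp SL2Z xM yM Q = evp SL2Z xM yM P"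
  then show "Q = P" using evp_inj[of "snd Q" "snd P" "fst Q" "fst P"] by (cases P; cases Q) auto
qed

lemma xM_nf: "xM = evp SL2Z xM yM (False, [1])"
  by (simp add: evp_M xpow) (simp add: xM_def)

lemma yM_nf: "yM = evp SL2Z xM yM (False, [-1, 0])"
  by (simp add: evp_M xpow Mz) (simp add: yM_def mmul_def)




theorem mainTheorem10:
  fixes \<phi> :: "vec2 \<Rightarrow> int"
  assumes "spin2 \<phi>" and "\<phi> (1,0) = 1" and "\<phi> (0,1) = 0"
  defines "G \<equiv> StabGroup \<phi>"
      and "x \<equiv> mmul t_alpha t_alpha"
      and "y \<equiv> t_beta"
  shows "spin_stab \<phi> = generate SL2Z {x, y}
    \<and> x \<in> carrier G \<and> y \<in> carrier G
    \<and> (x \<otimes>\<^bsub>G\<^esub> y) [^]\<^bsub>G\<^esub> (2::nat) = (y \<otimes>\<^bsub>G\<^esub> x) [^]\<^bsub>G\<^esub> (2::nat)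
    \<and> (x \<otimes>\<^bsub>G\<^esub> y) [^]\<^bsub>G\<^esub> (4::nat) = \<one>\<^bsub>G\<^esub>
    \<and> (\<forall>(H :: 'h monoid) h1 h2. group H \<longrightarrow> h1 \<in> carrier H \<longrightarrow> h2 \<in> carrier H
         \<longrightarrow> (h1 \<otimes>\<^bsub>H\<^esub> h2) [^]\<^bsub>H\<^esub> (2::nat) = (h2 \<otimes>\<^bsub>H\<^esub> h1) [^]\<^bsub>H\<^esub> (2::nat)
         \<longrightarrow> (h1 \<otimes>\<^bsub>H\<^esub> h2) [^]\<^bsub>H\<^esub> (4::nat) = \<one>\<^bsub>H\<^esub>
         \<longrightarrow> (\<exists>\<psi> \<in> hom G H. \<psi> x = h1 \<and> \<psi> y = h2
               \<and> (\<forall>\<psi>' \<in> hom G H. \<psi>' x = h1 \<longrightarrow> \<psi>' y = h2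
                     \<longrightarrow> (\<forall>g \<in> carrier G. \<psi>' g = \<psi> g))))"
proof -
  interpret sc: spin_ctx \<phi> using assms(1-3) by unfold_locales
  have xe: "x = xM" unfolding x_def by (rule xM_eq)
  have ye: "y = yM" unfolding y_def by (rule yM_eq)
  have stab: "spin_stab \<phi> = Gam" by (rule sc.stab_eq)
  have Ge: "G = SL2Z\<lparr>carrier := Gam\<rparr>" unfolding G_def StabGroup_def stab ..
  have cG: "carrier G = Gam" unfolding Ge by simp
  have mG: "mult G = mmul" unfolding Ge by simp
  have oG: "one G = (1,0,0,1)" unfolding Ge by simp
  have grG: "group G" unfolding Ge by (rule subgroup.subgroup_is_group[OF subgroup_Gam group_SL2Z])
  have xG: "xM \<in> Gam" and yG: "yM \<in> Gam" by (simp_all add: Gam_def xM_def yM_def mdet_def)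
  have P1: "spin_stab \<phi> = generate SL2Z {x, y}" unfolding stab xe ye by (rule Gam_gen)
  have P3: "(x \<otimes>\<^bsub>G\<^esub> y) [^]\<^bsub>G\<^esub> (2::nat) = (y \<otimes>\<^bsub>G\<^esub> x) [^]\<^bsub>G\<^esub> (2::nat)"
    unfolding xe ye by (simp add: mG oG numeral_eq_Suc xM_def yM_def mmul_def)
  have P4: "(x \<otimes>\<^bsub>G\<^esub> y) [^]\<^bsub>G\<^esub> (4::nat) = \<one>\<^bsub>G\<^esub>"
    unfolding xe ye by (simp add: mG oG numeral_eq_Suc xM_def yM_def mmul_def)
  have P5: "\<exists>\<psi> \<in> hom G H. \<psi> x = h1 \<and> \<psi> y = h2
               \<and> (\<forall>\<psi>' \<in> hom G H. \<psi>' x = h1 \<longrightarrow> \<psi>' y = h2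
                     \<longrightarrow> (\<forall>g \<in> carrier G. \<psi>' g = \<psi> g))"
    if gH: "group H" and h1: "h1 \<in> carrier H" and h2: "h2 \<in> carrier H"
      and r1: "(h1 \<otimes>\<^bsub>H\<^esub> h2) [^]\<^bsub>H\<^esub> (2::nat) = (h2 \<otimes>\<^bsub>H\<^esub> h1) [^]\<^bsub>H\<^esub> (2::nat)"
      and r2: "(h1 \<otimes>\<^bsub>H\<^esub> h2) [^]\<^bsub>H\<^esub> (4::nat) = \<one>\<^bsub>H\<^esub>"
    for H :: "'h monoid" and h1 h2
  proof -
    interpret HR: rels H h1 h2 using gH h1 h2 r1 r2 by (simp add: rels_def rels_axioms_def)
    define \<psi> where "\<psi> g = evp H h1 h2 (nfof g)" for g
    have hom: "\<psi> \<in> hom G H"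
    proof (unfold hom_def, safe)
      fix g assume "g \<in> carrier G"
      then show "\<psi> g \<in> carrier H" by (simp add: \<psi>_def)
    next
      fix g k assume g: "g \<in> carrier G" and k: "k \<in> carrier G"
      define P where "P = nfof g"
      define Q where "Q = nfof k"
      have Pp: "nf (snd P)" "evp SL2Z xM yM P = g" using nfof g cG P_def by auto
      have Qp: "nf (snd Q)" "evp SL2Z xM yM Q = k" using nfof k cG Q_def by auto
      have ne: "snd P \<noteq> []" using Pp by auto
      have "g \<otimes>\<^bsub>G\<^esub> k = evp SL2Z xM yM (mulnf P Q)"
        using M.mulnf_ev[OF ne, of Q] Pp Qp mG by simp
      then have "nfof (g \<otimes>\<^bsub>G\<^esub> k) = mulnf P Q" using nfof_eq nf_mulnf Pp by simp
      then show "\<psi> (g \<otimes>\<^bsub>G\<^esub> k) = \<psi> g \<otimes>\<^bsub>H\<^esub> \<psi> k"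
        unfolding \<psi>_def using HR.mulnf_ev[OF ne, of Q] P_def Q_def by simp
    qed
    have px: "\<psi> xM = h1"
    proof -
      have "nfof xM = (False, [1])" using nfof_eq[of "(False,[1])"] xM_nf by simp
      then show ?thesis by (simp add: \<psi>_def evp_def h1)
    qed
    have py: "\<psi> yM = h2"
    proof -
      have "nfof yM = (False, [-1, 0])" using nfof_eq[of "(False,[-1,0])"] yM_nf by simp
      then have "\<psi> yM = inv\<^bsub>H\<^esub> h1 \<otimes>\<^bsub>H\<^esub> (h1 \<otimes>\<^bsub>H\<^esub> h2)"
        by (simp add: \<psi>_def HR.evp_def' h1 h2 HR.z_def HR.int_pow_neg[of h1 1, simplified])
      also have "\<dots> = h2" by (simp add: HR.m_assoc[symmetric] h1 h2)
      finally show ?thesis .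
    qed
    have uniq: "\<psi>' g = \<psi> g" if hp: "\<psi>' \<in> hom G H" "\<psi>' xM = h1" "\<psi>' yM = h2" and g: "g \<in> carrier G" for \<psi>' g
    proof -
      have gp: "nf (snd (nfof g))" "evp SL2Z xM yM (nfof g) = g" using nfof g cG by auto
      have e: "g = evp G xM yM (nfof g)"
        unfolding Ge using evp_sub[OF group_SL2Z subgroup_Gam xG yG] gp by simp
      have "\<psi>' g = \<psi>' (evp G xM yM (nfof g))" by (rule arg_cong[OF e])
      also have "\<dots> = evp H (\<psi>' xM) (\<psi>' yM) (nfof g)"
        using evp_hom[OF grG gH hp(1), of xM yM] xG yG cG by simp
      finally have "\<psi>' g = evp H (\<psi>' xM) (\<psi>' yM) (nfof g)" .
      then show ?thesis using hp by (simp add: \<psi>_def)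
    qed
    show ?thesis unfolding xe ye using hom px py uniq by blast
  qed
  show ?thesis using P1 P3 P4 P5 xG yG cG xe ye by blast
qed


end
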